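(* Let $n$ be a positive integer and let $L_2(n)$ denote the number of $2\times n$ Latin rectangles. Then \[ L_2(n)=\sum_{s_{00}+s_{10}+s_{01}+s_{11}=n}(-1)^{s_{10}+s_{01}+2s_{11}}\frac{n!}{s_{00}!\,s_{10}!\,s_{01}!\,s_{11}!}\big[(s_{00}+s_{10})(s_{00}+s_{01})-s_{00}\big]^n, \] where the sum runs over all quadruples of nonnegative integers with sum $n$.
   Context: A $k\times n$ Latin rectangle is a $k\times n$ matrix with entries in $\{1,\dots,n\}$ such that no row and no column contains a repeated entry (so each row is a permutation of $\{1,\dots,n\}$). The convention $0^0=1$ is used. *)

theory Defs
  imports Main
begin

text \<open>A k x n Latin rectangle, represented as a function M :: nat => nat => nat,
  where M i j is the entry in row i (0 <= i < k) and column j (0 <= j < n).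
  Outside the index range the function is fixed to 0, so that rectangles
  correspond bijectively to such functions.\<close>
definition latin_rect :: "nat \<Rightarrow> nat \<Rightarrow> (nat \<Rightarrow> nat \<Rightarrow> nat) \<Rightarrow> bool" where
  "latin_rect k n M \<longleftrightarrow>
     (\<forall>i j. \<not> (i < k \<and> j < n) \<longrightarrow> M i j = 0) \<and>
     (\<forall>i<k. \<forall>j<n. M i j \<in> {1..n}) \<and>
     (\<forall>i<k. inj_on (M i) {0..<n}) \<and>
     (\<forall>j<n. inj_on (\<lambda>i. M i j) {0..<k})"

definition num_latin_rect :: "nat \<Rightarrow> nat \<Rightarrow> nat" where
  "num_latin_rect k n = card {M. latin_rect k n M}"

end

theory Submission
  imports Defs "HOL-Library.FuncSet" "HOL-Combinatorics.Multiset_Permutations"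
begin


definition jq :: "nat \<times> nat \<times> nat \<times> nat \<Rightarrow> nat multiset" where
  "jq q = (case q of (a,b,c,d) \<Rightarrow> replicate_mset a 0 + replicate_mset b 1 + replicate_mset c 2 + replicate_mset d 3)"

lemma count_jq: "count (jq (a,b,c,d)) x = (if x = 0 then a else if x = 1 then b else if x = 2 then c else if x = 3 then d else 0)"
  by (auto simp: jq_def)

lemma set_jq: "set_mset (jq q) \<subseteq> {0,1,2,3}"
  by (cases q) (auto simp: jq_def split: if_splits)

lemma card_perm_jq:
  "card (permutations_of_multiset (jq (a,b,c,d))) = fact (a+b+c+d) div (fact a * fact b * fact c * fact d)"
proof -
  have "(\<Prod>x\<in>set_mset (jq (a,b,c,d)). fact (count (jq (a,b,c,d)) x) :: nat)
      = (\<Prod>x\<in>{0,1,2,3}. fact (count (jq (a,b,c,d)) x))"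
    by (rule prod.mono_neutral_left) (use set_jq in \<open>auto simp: not_in_iff\<close>)
  also have "\<dots> = fact a * fact b * fact c * fact d" by (simp add: count_jq)
  finally show ?thesis using card_permutations_of_multiset(1)[of "jq (a,b,c,d)"]
    by (simp add: jq_def)
qed

lemma quad_finite: "finite {(a, b, c, d). a + b + c + d = (n::nat)}"
proof -
  have "{(a, b, c, d). a + b + c + d = n} \<subseteq> {0..n} \<times> {0..n} \<times> {0..n} \<times> {0..n}" by auto
  then show ?thesis by (rule finite_subset) auto
qed

lemma regroup_lists:
  fixes h :: "nat multiset \<Rightarrow> int"
  shows "(\<Sum>xs\<in>{xs. length xs = n \<and> set xs \<subseteq> {0,1,2,3::nat}}. h (mset xs)) =
    (\<Sum>(a,b,c,d)\<in>{(a, b, c, d). a + b + c + d = n}.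
       int (fact n div (fact a * fact b * fact c * fact d)) * h (jq (a,b,c,d)))"
proof -
  let ?L = "{xs. length xs = n \<and> set xs \<subseteq> {0,1,2,3::nat}}"
  have finL: "finite ?L"
    by (rule finite_subset[OF _ finite_lists_length_eq[of "{0,1,2,3::nat}" n]]) auto
  have "(\<Sum>xs\<in>?L. h (mset xs)) = (\<Sum>M\<in>mset ` ?L. \<Sum>xs\<in>{xs \<in> ?L. mset xs = M}. h (mset xs))"
    by (rule sum.image_gen[OF finL])
  also have "\<dots> = (\<Sum>M\<in>mset ` ?L. int (card (permutations_of_multiset M)) * h M)"
  proof (rule sum.cong[OF refl])
    fix M assume "M \<in> mset ` ?L"
    then obtain ys where ys: "ys \<in> ?L" "M = mset ys" by auto
    have "{xs \<in> ?L. mset xs = M} = permutations_of_multiset M"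
      using ys by (auto simp: permutations_of_multiset_def dest: mset_eq_length mset_eq_setD)
    moreover have "(\<Sum>xs\<in>permutations_of_multiset M. h (mset xs)) = (\<Sum>xs\<in>permutations_of_multiset M. h M)"
      by (rule sum.cong) (auto simp: permutations_of_multiset_def)
    ultimately show "(\<Sum>xs\<in>{xs \<in> ?L. mset xs = M}. h (mset xs)) = int (card (permutations_of_multiset M)) * h M"
      by simp
  qed
  also have "\<dots> = (\<Sum>(a,b,c,d)\<in>{(a, b, c, d). a + b + c + d = n}.
       int (fact n div (fact a * fact b * fact c * fact d)) * h (jq (a,b,c,d)))"
  proof (rule sum.reindex_bij_witness[of _ jq "\<lambda>M. (count M 0, count M 1, count M 2, count M 3)"])
    fix q :: "nat \<times> nat \<times> nat \<times> nat"
    assume q: "q \<in> {(a, b, c, d). a + b + c + d = n}"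
    obtain a b c d where qd: "q = (a,b,c,d)" by (cases q) auto
    show "(count (jq q) 0, count (jq q) 1, count (jq q) 2, count (jq q) 3) = q"
      by (simp add: qd count_jq)
    show "jq q \<in> mset ` ?L"
    proof (rule image_eqI)
      show "jq q = mset (replicate a 0 @ replicate b 1 @ replicate c 2 @ replicate d 3)"
        by (simp add: qd jq_def)
      show "replicate a 0 @ replicate b 1 @ replicate c 2 @ replicate d 3 \<in> ?L"
        using q qd by auto
    qed
  next
    fix M assume M: "M \<in> mset ` ?L"
    then obtain ys where ys: "ys \<in> ?L" "M = mset ys" by auto
    have sub: "set_mset M \<subseteq> {0,1,2,3}" using ys by auto
    show eq: "jq (count M 0, count M 1, count M 2, count M 3) = M"
    proof (rule multiset_eqI)
      fix x show "count (jq (count M 0, count M 1, count M 2, count M 3)) x = count M x"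
        using sub by (auto simp: count_jq count_eq_zero_iff)
    qed
    have "size M = n" using ys by auto
    then have "size (jq (count M 0, count M 1, count M 2, count M 3)) = n" using eq by simp
    then show "(count M 0, count M 1, count M 2, count M 3) \<in> {(a, b, c, d). a + b + c + d = n}"
      by (simp add: jq_def)
    have "int (card (permutations_of_multiset M)) * h M =
      int (card (permutations_of_multiset (jq (count M 0, count M 1, count M 2, count M 3)))) * h (jq (count M 0, count M 1, count M 2, count M 3))"
      using eq by simp
    also have "\<dots> = int (fact n div (fact (count M 0) * fact (count M 1) * fact (count M 2) * fact (count M 3))) * h (jq (count M 0, count M 1, count M 2, count M 3))"
      using \<open>size (jq (count M 0, count M 1, count M 2, count M 3)) = n\<close>
        card_perm_jq[of "count M 0" "count M 1" "count M 2" "count M 3"]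
      by (simp only: size_union size_replicate_mset jq_def prod.case)
    finally show "(case (count M 0, count M 1, count M 2, count M 3) of (a, b, c, d) \<Rightarrow> int (fact n div (fact a * fact b * fact c * fact d)) * h (jq (a, b, c, d))) = int (card (permutations_of_multiset M)) * h M"
      by simp
  qed
  finally show ?thesis .
qed

lemma count_map_upt: "count (mset (map \<phi> [1..<Suc n])) k = card {v\<in>{1..n}. \<phi> v = k}"
proof -
  have "count (mset (map \<phi> [1..<Suc n])) k = length (filter (\<lambda>v. \<phi> v = k) [1..<Suc n])"
    unfolding count_mset count_list_eq_length_filter filter_map o_def by (simp only: eq_commute length_map)
  also have "\<dots> = card ({v. \<phi> v = k} \<inter> set [1..<Suc n])"
    by (rule distinct_length_filter) simp
  also have "{v. \<phi> v = k} \<inter> set [1..<Suc n] = {v\<in>{1..n}. \<phi> v = k}" by auto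
  finally show ?thesis .
qed

lemma regroup_fun:
  fixes H :: "nat \<Rightarrow> nat \<Rightarrow> nat \<Rightarrow> nat \<Rightarrow> int"
  shows "(\<Sum>\<phi>\<in>PiE {1..n} (\<lambda>_. {0,1,2,3::nat}). H (card {v\<in>{1..n}. \<phi> v = 0}) (card {v\<in>{1..n}. \<phi> v = 1})
           (card {v\<in>{1..n}. \<phi> v = 2}) (card {v\<in>{1..n}. \<phi> v = 3})) =
    (\<Sum>(a,b,c,d)\<in>{(a, b, c, d). a + b + c + d = n}.
       int (fact n div (fact a * fact b * fact c * fact d)) * H a b c d)"
proof -
  let ?h = "\<lambda>M. H (count M 0) (count M 1) (count M 2) (count M 3)"
  have "(\<Sum>\<phi>\<in>PiE {1..n} (\<lambda>_. {0,1,2,3::nat}). H (card {v\<in>{1..n}. \<phi> v = 0}) (card {v\<in>{1..n}. \<phi> v = 1})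
           (card {v\<in>{1..n}. \<phi> v = 2}) (card {v\<in>{1..n}. \<phi> v = 3})) =
        (\<Sum>xs\<in>{xs. length xs = n \<and> set xs \<subseteq> {0,1,2,3::nat}}. ?h (mset xs))"
  proof (rule sum.reindex_bij_witness[of _ "\<lambda>xs v. if v \<in> {1..n} then xs ! (v-1) else undefined"
        "\<lambda>\<phi>. map \<phi> [1..<Suc n]"])
    fix \<phi> assume \<phi>: "\<phi> \<in> PiE {1..n} (\<lambda>_. {0,1,2,3::nat})"
    show "(\<lambda>v. if v \<in> {1..n} then map \<phi> [1..<Suc n] ! (v - 1) else undefined) = \<phi>"
    proof
      fix v show "(if v \<in> {1..n} then map \<phi> [1..<Suc n] ! (v - 1) else undefined) = \<phi> v"
        using \<phi> by (cases "v \<in> {1..n}") (auto simp del: upt_Suc simp: nth_map PiE_def extensional_def)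
    qed
    show "map \<phi> [1..<Suc n] \<in> {xs. length xs = n \<and> set xs \<subseteq> {0,1,2,3}}"
      using \<phi> by (auto simp: PiE_def Pi_def)
    show "?h (mset (map \<phi> [1..<Suc n])) = H (card {v\<in>{1..n}. \<phi> v = 0}) (card {v\<in>{1..n}. \<phi> v = 1})
           (card {v\<in>{1..n}. \<phi> v = 2}) (card {v\<in>{1..n}. \<phi> v = 3})"
      by (simp only: count_map_upt)
  next
    fix xs :: "nat list" assume xs: "xs \<in> {xs. length xs = n \<and> set xs \<subseteq> {0,1,2,3}}"
    show "map (\<lambda>v. if v \<in> {1..n} then xs ! (v - 1) else undefined) [1..<Suc n] = xs"
      using xs by (intro nth_equalityI) (auto simp del: upt_Suc)
    show "(\<lambda>v. if v \<in> {1..n} then xs ! (v - 1) else undefined) \<in> PiE {1..n} (\<lambda>_. {0,1,2,3})"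
    proof -
      have "xs ! (v - 1) \<in> {0,1,2,3}" if "v \<in> {1..n}" for v
      proof -
        have "v - 1 < length xs" using xs that by auto
        then have "xs ! (v - 1) \<in> set xs" by (rule nth_mem)
        then show ?thesis using xs by blast
      qed
      then show ?thesis by (auto simp: PiE_def extensional_def Pi_def)
    qed
  qed
  also have "\<dots> = (\<Sum>(a,b,c,d)\<in>{(a, b, c, d). a + b + c + d = n}.
       int (fact n div (fact a * fact b * fact c * fact d)) * ?h (jq (a,b,c,d)))"
    by (rule regroup_lists)
  also have "\<dots> = (\<Sum>(a,b,c,d)\<in>{(a, b, c, d). a + b + c + d = n}.
       int (fact n div (fact a * fact b * fact c * fact d)) * H a b c d)"
    by (simp add: count_jq)
  finally show ?thesis .
qed



definition D0 :: "nat \<Rightarrow> (nat \<times> nat) set" where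
  "D0 n = {(x,y). x \<in> {1..n} \<and> y \<in> {1..n} \<and> x \<noteq> y}"
definition Col :: "nat \<Rightarrow> (nat \<Rightarrow> nat \<times> nat) set" where
  "Col n = PiE {0..<n} (\<lambda>_. D0 n)"
definition Good :: "nat \<Rightarrow> (nat \<Rightarrow> nat \<times> nat) set" where
  "Good n = {c \<in> Col n. \<forall>v\<in>{1..n}. v \<in> (\<lambda>j. fst (c j)) ` {0..<n} \<and> v \<in> (\<lambda>j. snd (c j)) ` {0..<n}}"
definition sg :: "nat \<Rightarrow> int" where
  "sg p = (if p = 1 \<or> p = 2 then -1 else 1)"
definition alw :: "nat \<Rightarrow> (nat \<Rightarrow> nat \<times> nat) \<Rightarrow> nat \<Rightarrow> nat \<Rightarrow> bool" where
  "alw n c v p = (((p = 1 \<or> p = 3) \<longrightarrow> v \<notin> (\<lambda>j. fst (c j)) ` {0..<n}) \<and>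
                  ((p = 2 \<or> p = 3) \<longrightarrow> v \<notin> (\<lambda>j. snd (c j)) ` {0..<n}))"
definition Dp :: "nat \<Rightarrow> (nat \<Rightarrow> nat) \<Rightarrow> (nat \<times> nat) set" where
  "Dp n \<phi> = {(x,y) \<in> D0 n. \<phi> x \<in> {0,2} \<and> \<phi> y \<in> {0,1}}"

lemma finite_D0: "finite (D0 n)"
  by (rule finite_subset[of _ "{1..n} \<times> {1..n}"]) (auto simp: D0_def)

lemma finite_Col: "finite (Col n)"
  unfolding Col_def by (intro finite_PiE) (auto simp: finite_D0)

lemma prod_ind:
  assumes "finite A"
  shows "(\<Prod>v\<in>A. (if Q v then 1 else 0 :: int)) = (if \<forall>v\<in>A. Q v then 1 else 0)"
proof (cases "\<forall>v\<in>A. Q v")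
  case True then show ?thesis by simp
next
  case False
  then obtain v where "v \<in> A" "\<not> Q v" by auto
  then show ?thesis using assms False by (intro trans[OF prod_zero]) auto
qed

lemma inner_sum:
  "(\<Sum>p\<in>{0,1,2,3::nat}. sg p * (if alw n c v p then 1 else 0)) =
   (if v \<in> (\<lambda>j. fst (c j)) ` {0..<n} \<and> v \<in> (\<lambda>j. snd (c j)) ` {0..<n} then 1 else 0)"
  by (cases "v \<in> (\<lambda>j. fst (c j)) ` {0..<n}"; cases "v \<in> (\<lambda>j. snd (c j)) ` {0..<n}")
     (simp_all add: sg_def alw_def)

lemma set_alw:
  assumes \<phi>: "\<phi> \<in> PiE {1..n} (\<lambda>_. {0,1,2,3::nat})"
  shows "{c \<in> Col n. \<forall>v\<in>{1..n}. alw n c v (\<phi> v)} = PiE {0..<n} (\<lambda>_. Dp n \<phi>)"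
proof (intro equalityI subsetI)
  fix c assume c: "c \<in> {c \<in> Col n. \<forall>v\<in>{1..n}. alw n c v (\<phi> v)}"
  show "c \<in> PiE {0..<n} (\<lambda>_. Dp n \<phi>)"
  proof -
    have "c j \<in> Dp n \<phi>" if j: "j \<in> {0..<n}" for j
    proof -
      obtain x y where xy: "c j = (x,y)" by (cases "c j")
      have d: "(x,y) \<in> D0 n" using PiE_mem[of c "{0..<n}" "\<lambda>_. D0 n" j] c j xy by (simp add: Col_def)
      then have x: "x \<in> {1..n}" and y: "y \<in> {1..n}" by (auto simp: D0_def)
      have "x \<in> (\<lambda>j. fst (c j)) ` {0..<n}" using j xy by (auto intro!: image_eqI[of _ _ j])
      moreover have "y \<in> (\<lambda>j. snd (c j)) ` {0..<n}" using j xy by (auto intro!: image_eqI[of _ _ j])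
      moreover have "alw n c x (\<phi> x)" "alw n c y (\<phi> y)" using c x y by auto
      moreover have "\<phi> x \<in> {0,1,2,3}" "\<phi> y \<in> {0,1,2,3}" using PiE_mem[OF \<phi> x] PiE_mem[OF \<phi> y] by auto
      ultimately have "\<phi> x \<in> {0,2}" "\<phi> y \<in> {0,1}" by (auto simp: alw_def)
      then show ?thesis using d xy by (simp add: Dp_def)
    qed
    then show ?thesis using c by (auto simp: Col_def PiE_def)
  qed
next
  fix c assume c: "c \<in> PiE {0..<n} (\<lambda>_. Dp n \<phi>)"
  have "c \<in> Col n" using c by (auto simp: Col_def PiE_def Pi_def Dp_def)
  moreover have "alw n c v (\<phi> v)" if "v \<in> {1..n}" for v
  proof -
    have "\<phi> (fst (c j)) \<in> {0,2} \<and> \<phi> (snd (c j)) \<in> {0,1}" if "j \<in> {0..<n}" for j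
    proof -
      have "c j \<in> Dp n \<phi>" using PiE_mem[OF c that] .
      then show ?thesis by (cases "c j") (auto simp: Dp_def)
    qed
    note h = this
    have 1: "\<phi> v \<notin> {1,3}" if "v \<in> (\<lambda>j. fst (c j)) ` {0..<n}"
    proof -
      from that obtain j where "j \<in> {0..<n}" "v = fst (c j)" by auto
      then show ?thesis using h[of j] by auto
    qed
    have 2: "\<phi> v \<notin> {2,3}" if "v \<in> (\<lambda>j. snd (c j)) ` {0..<n}"
    proof -
      from that obtain j where "j \<in> {0..<n}" "v = snd (c j)" by auto
      then show ?thesis using h[of j] by auto
    qed
    show ?thesis unfolding alw_def using 1 2 by blast
  qed
  ultimately show "c \<in> {c \<in> Col n. \<forall>v\<in>{1..n}. alw n c v (\<phi> v)}" by auto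
qed

lemma incl_excl:
  "int (card (Good n)) = (\<Sum>\<phi>\<in>PiE {1..n} (\<lambda>_. {0,1,2,3::nat}).
      (\<Prod>v\<in>{1..n}. sg (\<phi> v)) * int (card (PiE {0..<n} (\<lambda>_. Dp n \<phi>))))"
proof -
  let ?K = "{0,1,2,3::nat}"
  let ?P = "PiE {1..n} (\<lambda>_. ?K)"
  have finP: "finite ?P" by (intro finite_PiE) auto
  have "int (card (Good n)) = (\<Sum>c\<in>Good n. 1)" by simp
  also have "\<dots> = (\<Sum>c\<in>Col n. if \<forall>v\<in>{1..n}. v \<in> (\<lambda>j. fst (c j)) ` {0..<n} \<and> v \<in> (\<lambda>j. snd (c j)) ` {0..<n} then 1 else 0)"
    unfolding Good_def by (rule sum.inter_filter[OF finite_Col])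
  also have "\<dots> = (\<Sum>c\<in>Col n. \<Prod>v\<in>{1..n}. \<Sum>p\<in>?K. sg p * (if alw n c v p then 1 else 0))"
    by (simp only: inner_sum prod_ind[OF finite_atLeastAtMost])
  also have "\<dots> = (\<Sum>c\<in>Col n. \<Sum>\<phi>\<in>?P. \<Prod>v\<in>{1..n}. sg (\<phi> v) * (if alw n c v (\<phi> v) then 1 else 0))"
    by (intro sum.cong refl prod_sum_PiE) auto
  also have "\<dots> = (\<Sum>\<phi>\<in>?P. \<Sum>c\<in>Col n. \<Prod>v\<in>{1..n}. sg (\<phi> v) * (if alw n c v (\<phi> v) then 1 else 0))"
    by (rule sum.swap)
  also have "\<dots> = (\<Sum>\<phi>\<in>?P. (\<Prod>v\<in>{1..n}. sg (\<phi> v)) * (\<Sum>c\<in>Col n. if \<forall>v\<in>{1..n}. alw n c v (\<phi> v) then 1 else 0))"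
    by (simp only: prod.distrib prod_ind[OF finite_atLeastAtMost] sum_distrib_left)
  also have "\<dots> = (\<Sum>\<phi>\<in>?P. (\<Prod>v\<in>{1..n}. sg (\<phi> v)) * int (card {c \<in> Col n. \<forall>v\<in>{1..n}. alw n c v (\<phi> v)}))"
    by (simp only: sum.inter_filter[OF finite_Col, symmetric]) simp
  also have "\<dots> = (\<Sum>\<phi>\<in>?P. (\<Prod>v\<in>{1..n}. sg (\<phi> v)) * int (card (PiE {0..<n} (\<lambda>_. Dp n \<phi>))))"
    by (intro sum.cong refl) (subst set_alw, auto)
  finally show ?thesis .
qed



lemma card_cls_split:
  assumes "k \<noteq> l"
  shows "card {x\<in>{1..n}. \<phi> x \<in> {k,l}} = card {x\<in>{1..n}. \<phi> x = k} + card {x\<in>{1..(n::nat)}. \<phi> x = l}"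
proof -
  have "{x\<in>{1..n}. \<phi> x \<in> {k,l}} = {x\<in>{1..n}. \<phi> x = k} \<union> {x\<in>{1..n}. \<phi> x = l}" by auto
  moreover have "card ({x\<in>{1..n}. \<phi> x = k} \<union> {x\<in>{1..n}. \<phi> x = l}) = card {x\<in>{1..n}. \<phi> x = k} + card {x\<in>{1..(n::nat)}. \<phi> x = l}"
    by (rule card_Un_disjoint) (use assms in auto)
  ultimately show ?thesis by simp
qed

lemma card_Dp:
  "int (card (Dp n \<phi>)) =
     int ((card {x\<in>{1..n}. \<phi> x = 0} + card {x\<in>{1..n}. \<phi> x = 1}) *
          (card {x\<in>{1..n}. \<phi> x = 0} + card {x\<in>{1..n}. \<phi> x = 2})) - int (card {x\<in>{1..n}. \<phi> x = 0})"
proof -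
  define A1 where "A1 = {x\<in>{1..n}. \<phi> x \<in> {0,2}}"
  define A2 where "A2 = {x\<in>{1..n}. \<phi> x \<in> {0,1}}"
  define A0 where "A0 = {x\<in>{1..n}. \<phi> x = 0}"
  have eq: "Dp n \<phi> = A1 \<times> A2 - (\<lambda>x. (x,x)) ` A0"
    by (auto simp: Dp_def D0_def A1_def A2_def A0_def)
  have sub: "(\<lambda>x. (x,x)) ` A0 \<subseteq> A1 \<times> A2" by (auto simp: A1_def A2_def A0_def)
  have fin: "finite A0" "finite A1" "finite A2" by (auto simp: A1_def A2_def A0_def)
  have "card (Dp n \<phi>) = card (A1 \<times> A2) - card ((\<lambda>x. (x,x)) ` A0)"
    unfolding eq using fin sub by (intro card_Diff_subset) auto
  moreover have "card ((\<lambda>x. (x,x)) ` A0) = card A0" by (rule card_image) (auto simp: inj_on_def)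
  moreover have "card A0 \<le> card (A1 \<times> A2)"
    using card_mono[OF _ sub] fin by (simp add: card_image inj_on_def)
  ultimately have "int (card (Dp n \<phi>)) = int (card A1 * card A2) - int (card A0)"
    by (simp add: card_cartesian_product of_nat_diff)
  moreover have "card A1 = card {x\<in>{1..n}. \<phi> x = 0} + card {x\<in>{1..n}. \<phi> x = 2}"
    unfolding A1_def by (rule card_cls_split) simp
  moreover have "card A2 = card {x\<in>{1..n}. \<phi> x = 0} + card {x\<in>{1..n}. \<phi> x = 1}"
    unfolding A2_def by (rule card_cls_split) simp
  ultimately show ?thesis by (simp add: A0_def mult.commute)
qed

lemma prod_sg:
  "(\<Prod>v\<in>{1..n::nat}. sg (\<phi> v)) = (-1) ^ (card {x\<in>{1..n}. \<phi> x = 1} + card {x\<in>{1..n}. \<phi> x = 2})"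
proof -
  have "(\<Prod>v\<in>{1..n}. sg (\<phi> v)) = (\<Prod>v\<in>{1..n}. if \<phi> v \<in> {1,2} then -1 else 1)"
    by (intro prod.cong refl) (auto simp: sg_def)
  also have "\<dots> = (\<Prod>v\<in>{1..n} \<inter> {v. \<phi> v \<in> {1,2}}. -1) * (\<Prod>v\<in>{1..n} \<inter> - {v. \<phi> v \<in> {1,2}}. 1)"
    by (rule prod.If_cases) (rule finite_atLeastAtMost)
  also have "\<dots> = (-1) ^ card {x\<in>{1..n}. \<phi> x \<in> {1,2}}"
    by (simp add: Int_def conj_commute)
  also have "card {x\<in>{1..n}. \<phi> x \<in> {1,2}} = card {x\<in>{1..n}. \<phi> x = 1} + card {x\<in>{1..n}. \<phi> x = 2}"
    by (rule card_cls_split) simp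
  finally show ?thesis .
qed



lemma inj_iff_surj:
  fixes g :: "nat \<Rightarrow> nat"
  assumes "g ` {0..<n} \<subseteq> {1..n}"
  shows "inj_on g {0..<n} \<longleftrightarrow> {1..n} \<subseteq> g ` {0..<n}"
proof
  assume "inj_on g {0..<n}"
  then have "card (g ` {0..<n}) = card {1..n}" by (simp add: card_image)
  then have "g ` {0..<n} = {1..n}" using card_subset_eq[OF finite_atLeastAtMost assms] by simp
  then show "{1..n} \<subseteq> g ` {0..<n}" by simp
next
  assume "{1..n} \<subseteq> g ` {0..<n}"
  have "g ` {0..<n} = {1..n}" using assms \<open>{1..n} \<subseteq> g ` {0..<n}\<close> by (rule subset_antisym)
  then have "card (g ` {0..<n}) = card {0..<n}" by simp
  then show "inj_on g {0..<n}" using eq_card_imp_inj_on[of "{0..<n}" g] by simp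
qed

lemma inj_two: "inj_on h {0..<2::nat} \<longleftrightarrow> h 0 \<noteq> h 1"
proof -
  have "{0..<2::nat} = {0,1}" by auto
  then show ?thesis by (simp add: inj_on_insert)
qed

lemma card_latin: "num_latin_rect 2 n = card (Good n)"
proof -
  define f where "f M = (\<lambda>j\<in>{0..<n}. (M 0 j, M 1 j))" for M :: "nat \<Rightarrow> nat \<Rightarrow> nat"
  define f' where "f' c = (\<lambda>(i::nat) (j::nat). if i < 2 \<and> j < n then (if i = 0 then fst (c j) else snd (c j)) else 0)"
    for c :: "nat \<Rightarrow> nat \<times> nat"
  have "bij_betw f {M. latin_rect 2 n M} (Good n)"
  proof (rule bij_betw_byWitness[where f' = f'])
    show "\<forall>M\<in>{M. latin_rect 2 n M}. f' (f M) = M"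
    proof
      fix M assume "M \<in> {M. latin_rect 2 n M}"
      then have L: "latin_rect 2 n M" by simp
      show "f' (f M) = M"
      proof (intro ext)
        fix i j show "f' (f M) i j = M i j"
        proof (cases "i < 2 \<and> j < n")
          case True
          then have "i = 0 \<or> i = 1" by auto
          then show ?thesis using True by (auto simp: f_def f'_def)
        next
          case False
          then show ?thesis using L by (auto simp: f'_def latin_rect_def)
        qed
      qed
    qed
    show "\<forall>c\<in>Good n. f (f' c) = c"
    proof
      fix c assume "c \<in> Good n"
      then have c: "c \<in> PiE {0..<n} (\<lambda>_. D0 n)" by (simp add: Good_def Col_def)
      show "f (f' c) = c"
      proof (intro ext)
        fix j show "f (f' c) j = c j"
          using c by (cases "j < n") (auto simp: f_def f'_def PiE_def extensional_def)
      qed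
    qed
    show "f ` {M. latin_rect 2 n M} \<subseteq> Good n"
    proof
      fix c assume "c \<in> f ` {M. latin_rect 2 n M}"
      then obtain M where L: "latin_rect 2 n M" and c: "c = f M" by auto
      have ent: "M i j \<in> {1..n}" if "i < 2" "j < n" for i j using L that by (auto simp: latin_rect_def)
      have col: "M 0 j \<noteq> M 1 j" if "j < n" for j
        using L that inj_two[of "\<lambda>i. M i j"] by (auto simp: latin_rect_def)
      have inj0: "inj_on (M 0) {0..<n}" and inj1: "inj_on (M 1) {0..<n}" using L by (auto simp: latin_rect_def)
      have im0: "M 0 ` {0..<n} \<subseteq> {1..n}" and im1: "M 1 ` {0..<n} \<subseteq> {1..n}"
        using ent[of 0] ent[of 1] by auto
      have s0: "{1..n} \<subseteq> M 0 ` {0..<n}" using inj_iff_surj[OF im0] inj0 by simp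
      have s1: "{1..n} \<subseteq> M 1 ` {0..<n}" using inj_iff_surj[OF im1] inj1 by simp
      have e0: "(\<lambda>j. fst (c j)) ` {0..<n} = M 0 ` {0..<n}" by (auto simp: c f_def)
      have e1: "(\<lambda>j. snd (c j)) ` {0..<n} = M 1 ` {0..<n}" by (auto simp: c f_def)
      have "c \<in> Col n"
        using ent[of 0] ent[of 1] col by (auto simp: c f_def Col_def D0_def)
      then show "c \<in> Good n" using s0 s1 e0 e1 by (auto simp: Good_def)
    qed
    show "f' ` Good n \<subseteq> {M. latin_rect 2 n M}"
    proof
      fix M assume "M \<in> f' ` Good n"
      then obtain c where G: "c \<in> Good n" and M: "M = f' c" by auto
      have cD: "c j \<in> D0 n" if "j < n" for j
        using G that PiE_mem[of c "{0..<n}" "\<lambda>_. D0 n" j] by (auto simp: Good_def Col_def)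
      have cD': "fst (c j) \<in> {1..n} \<and> snd (c j) \<in> {1..n} \<and> fst (c j) \<noteq> snd (c j)" if "j < n" for j
        using cD[OF that] by (cases "c j") (simp add: D0_def)
      have r0: "M 0 = (\<lambda>j. if j < n then fst (c j) else 0)" and r1: "M 1 = (\<lambda>j. if j < n then snd (c j) else 0)"
        by (auto simp: M f'_def)
      have im0: "(\<lambda>j. fst (c j)) ` {0..<n} \<subseteq> {1..n}" and im1: "(\<lambda>j. snd (c j)) ` {0..<n} \<subseteq> {1..n}"
        using cD' by auto
      have s0: "{1..n} \<subseteq> (\<lambda>j. fst (c j)) ` {0..<n}" and s1: "{1..n} \<subseteq> (\<lambda>j. snd (c j)) ` {0..<n}"
        using G by (auto simp: Good_def)
      have inj0: "inj_on (\<lambda>j. fst (c j)) {0..<n}" using inj_iff_surj[OF im0] s0 by simp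
      have inj1: "inj_on (\<lambda>j. snd (c j)) {0..<n}" using inj_iff_surj[OF im1] s1 by simp
      have "\<forall>i<2. inj_on (M i) {0..<n}"
      proof (intro allI impI)
        fix i :: nat assume "i < 2"
        then have "i = 0 \<or> i = 1" by auto
        then show "inj_on (M i) {0..<n}"
        proof
          assume "i = 0" then show ?thesis using inj0 r0 by (simp add: inj_on_def)
        next
          assume "i = 1" then show ?thesis using inj1 r1 by (simp add: inj_on_def)
        qed
      qed
      moreover have "\<forall>j<n. inj_on (\<lambda>i. M i j) {0..<2}"
        using cD' by (auto simp: inj_two M f'_def)
      moreover have "\<forall>i<2. \<forall>j<n. M i j \<in> {1..n}"
        using cD' by (auto simp: M f'_def)
      moreover have "\<forall>i j. \<not> (i < 2 \<and> j < n) \<longrightarrow> M i j = 0"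
        by (auto simp: M f'_def)
      ultimately show "M \<in> {M. latin_rect 2 n M}" by (simp add: latin_rect_def)
    qed
  qed
  then show ?thesis unfolding num_latin_rect_def by (rule bij_betw_same_card)
qed


theorem mainTheorem2:
  fixes n :: nat
  assumes "n \<ge> 1"
  shows "int (num_latin_rect 2 n) =
    (\<Sum>(s00, s10, s01, s11) \<in> {(a, b, c, d). a + b + c + d = n}.
       (-1) ^ (s10 + s01 + 2 * s11) *
       int (fact n div (fact s00 * fact s10 * fact s01 * fact s11)) *
       (int ((s00 + s10) * (s00 + s01)) - int s00) ^ n)"
proof -
  define H where "H a b c d = (-1) ^ (b + c + 2 * d) * (int ((a + b) * (a + c)) - int a) ^ n"
    for a b c d :: nat
  have "int (num_latin_rect 2 n) = int (card (Good n))" by (simp add: card_latin)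
  also have "\<dots> = (\<Sum>\<phi>\<in>PiE {1..n} (\<lambda>_. {0,1,2,3::nat}).
      (\<Prod>v\<in>{1..n}. sg (\<phi> v)) * int (card (PiE {0..<n} (\<lambda>_. Dp n \<phi>))))"
    by (rule incl_excl)
  also have "\<dots> = (\<Sum>\<phi>\<in>PiE {1..n} (\<lambda>_. {0,1,2,3::nat}). H (card {v\<in>{1..n}. \<phi> v = 0}) (card {v\<in>{1..n}. \<phi> v = 1})
           (card {v\<in>{1..n}. \<phi> v = 2}) (card {v\<in>{1..n}. \<phi> v = 3}))"
  proof (intro sum.cong refl)
    fix \<phi> :: "nat \<Rightarrow> nat"
    have "card (PiE {0..<n} (\<lambda>_. Dp n \<phi>)) = card (Dp n \<phi>) ^ n"
      by (simp add: card_PiE)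
    then have "int (card (PiE {0..<n} (\<lambda>_. Dp n \<phi>))) = int (card (Dp n \<phi>)) ^ n" by simp
    moreover have "(-1::int) ^ (2 * card {v\<in>{1..n}. \<phi> v = 3}) = 1"
      by (simp add: power_mult)
    ultimately show "(\<Prod>v\<in>{1..n}. sg (\<phi> v)) * int (card (PiE {0..<n} (\<lambda>_. Dp n \<phi>))) =
       H (card {v\<in>{1..n}. \<phi> v = 0}) (card {v\<in>{1..n}. \<phi> v = 1})
           (card {v\<in>{1..n}. \<phi> v = 2}) (card {v\<in>{1..n}. \<phi> v = 3})"
      unfolding H_def prod_sg card_Dp by (simp add: power_add)
  qed
  also have "\<dots> = (\<Sum>(a,b,c,d)\<in>{(a, b, c, d). a + b + c + d = n}.
       int (fact n div (fact a * fact b * fact c * fact d)) * H a b c d)"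
    by (rule regroup_fun)
  also have "\<dots> = (\<Sum>(s00, s10, s01, s11) \<in> {(a, b, c, d). a + b + c + d = n}.
       (-1) ^ (s10 + s01 + 2 * s11) *
       int (fact n div (fact s00 * fact s10 * fact s01 * fact s11)) *
       (int ((s00 + s10) * (s00 + s01)) - int s00) ^ n)"
    by (intro sum.cong refl) (clarsimp simp: H_def mult_ac)
  finally show ?thesis .
qed

end
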